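(* For any $n,s\in\mathbb{N}$ and every real number $x$, $$\sum_{k=0}^{n-1}\frac{x^{2k}}{(2k+1)^s}=\sum_{k=1}^n(-1)^{k-1}\binom{n}{k}\,{}_{s+1}F_s\left(\{\tfrac12\}^{s},1-k;\{\tfrac32\}^{s};x^2\right).$$
   Context: $\mathbb{N}$ is the set of positive integers; $\{a\}^s$ denotes $a$ repeated $s$ times. The generalized hypergeometric function is ${}_{s+1}F_s(a_1,\ldots,a_{s+1};b_1,\ldots,b_s;x)=\sum_{i\geq 0}\frac{(a_1)_i\cdots(a_{s+1})_i}{(b_1)_i\cdots(b_s)_i}\frac{x^i}{i!}$, with $(a)_0=1$, $(a)_i=a(a+1)\cdots(a+i-1)$ for $i>0$; here since $1-k$ is a nonpositive integer the series is a finite sum. *)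

theory Defs
  imports "HOL-Analysis.Analysis"
begin

text \<open>In the statement the series
terminates, so suminf is the finite sum.\<close>
definition hyperF :: "real list \<Rightarrow> real list \<Rightarrow> real \<Rightarrow> real" where
  "hyperF as bs x =
     (\<Sum>i. (\<Prod>a\<leftarrow>as. pochhammer a i) / (\<Prod>b\<leftarrow>bs. pochhammer b i) * x ^ i / fact i)"

end

theory Submission imports Defs begin

lemma T_id:
  assumes "i \<le> n"
  shows "(\<Sum>j\<le>n. (-1)^j * real (n choose j) * real (j choose i)) = (if i = n then (-1)^n else 0)"
proof -
  have "(\<Sum>j\<le>n. (-1)^j * real (n choose j) * real (j choose i))
      = (\<Sum>j\<in>{i..n}. (-1)^j * real (n choose j) * real (j choose i))"
    by (rule sum.mono_neutral_right) auto
  also have "\<dots> = (\<Sum>j\<in>{i..n}. (-1)^j * real (n choose i) * real ((n-i) choose (j-i)))"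
  proof (rule sum.cong)
    fix j assume "j \<in> {i..n}"
    then have "(n choose j) * (j choose i) = (n choose i) * ((n - i) choose (j - i))"
      by (intro choose_mult) auto
    then have "real (n choose j) * real (j choose i) = real (n choose i) * real ((n - i) choose (j - i))"
      by (metis of_nat_mult)
    then show "(-1)^j * real (n choose j) * real (j choose i) = (-1)^j * real (n choose i) * real ((n-i) choose (j-i))"
      by (simp add: mult.assoc)
  qed simp
  also have "\<dots> = (\<Sum>l\<in>{0..n-i}. (-1)^(l+i) * real (n choose i) * real ((n-i) choose l))"
    using sum.shift_bounds_cl_nat_ivl[of "\<lambda>j. (-1)^j * real (n choose i) * real ((n-i) choose (j-i))" 0 i "n-i"] assms
    by simp
  also have "\<dots> = (-1)^i * real (n choose i) * (\<Sum>l\<le>n-i. (-1)^l * real ((n-i) choose l))"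
    by (simp add: sum_distrib_left atLeast0AtMost power_add mult_ac)
  also have "\<dots> = (if i = n then (-1)^n else 0)"
  proof (cases "i = n")
    case True then show ?thesis by simp
  next
    case False
    then have "n - i > 0" using assms by simp
    then show ?thesis using choose_alternating_sum[of "n-i"] False by simp
  qed
  finally show ?thesis .
qed

lemma inv_id:
  fixes a :: "nat \<Rightarrow> real"
  shows "(\<Sum>j\<le>n. (-1)^j * real (n choose j) * (\<Sum>i\<le>j. (-1)^i * real (j choose i) * a i)) = a n"
proof -
  have "(\<Sum>j\<le>n. (-1)^j * real (n choose j) * (\<Sum>i\<le>j. (-1)^i * real (j choose i) * a i))
     = (\<Sum>j\<le>n. (-1)^j * real (n choose j) * (\<Sum>i\<le>n. (-1)^i * real (j choose i) * a i))"
  proof (rule sum.cong[OF refl])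
    fix j assume "j \<in> {..n}"
    then have "(\<Sum>i\<le>n. (-1)^i * real (j choose i) * a i) = (\<Sum>i\<le>j. (-1)^i * real (j choose i) * a i)"
      by (intro sum.mono_neutral_right) auto
    then show "(-1)^j * real (n choose j) * (\<Sum>i\<le>j. (-1)^i * real (j choose i) * a i)
      = (-1)^j * real (n choose j) * (\<Sum>i\<le>n. (-1)^i * real (j choose i) * a i)" by simp
  qed
  also have "\<dots> = (\<Sum>i\<le>n. (-1)^i * a i * (\<Sum>j\<le>n. (-1)^j * real (n choose j) * real (j choose i)))"
    unfolding sum_distrib_left sum_distrib_right by (subst sum.swap) (simp add: mult_ac)
  also have "\<dots> = (\<Sum>i\<le>n. (-1)^i * a i * (if i = n then (-1)^n else 0))"
    by (intro sum.cong) (auto simp: T_id)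
  also have "\<dots> = (\<Sum>i\<in>{n}. (-1)^i * a i * (if i = n then (-1)^n else 0))"
    by (rule sum.mono_neutral_right) auto
  also have "\<dots> = a n" by (simp flip: power_add)
  finally show ?thesis .
qed

lemma P1: "pochhammer (1/2::real) i / pochhammer (3/2) i = 1 / (2 * real i + 1)"
proof -
  have a: "pochhammer (1/2::real) (Suc i) = (1/2) * pochhammer (3/2) i"
    by (simp add: pochhammer_rec)
  have b: "pochhammer (1/2::real) (Suc i) = pochhammer (1/2) i * (1/2 + real i)"
    by (simp add: pochhammer_rec')
  have c: "pochhammer (3/2::real) i \<noteq> 0"
    by (simp add: pochhammer_eq_0_iff)
  from a b c show ?thesis by (simp add: field_simps)
qed

lemma P2:
  assumes "k \<ge> 1"
  shows "pochhammer (1 - real k) i / fact i = (-1)^i * real ((k-1) choose i)"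
proof -
  have "real ((k-1) choose i) = real (k-1) gchoose i" by (rule binomial_gbinomial)
  also have "\<dots> = (-1)^i * pochhammer (1 - real k) i / fact i"
    using assms by (simp add: gbinomial_pochhammer of_nat_diff)
  finally show ?thesis by simp
qed

lemma hyp_eval:
  assumes "k \<ge> 1"
  shows "hyperF (replicate s (1/2) @ [1 - real k]) (replicate s (3/2)) y
     = (\<Sum>i\<le>k-1. (-1)^i * real ((k-1) choose i) * (y^i / (2 * real i + 1)^s))"
proof -
  have t: "(\<Prod>a\<leftarrow>replicate s (1/2) @ [1 - real k]. pochhammer a i) / (\<Prod>b\<leftarrow>replicate s (3/2). pochhammer b i) * y ^ i / fact i
     = (-1)^i * real ((k-1) choose i) * (y^i / (2 * real i + 1)^s)" for i
  proof -
    have "(\<Prod>a\<leftarrow>replicate s (1/2) @ [1 - real k]. pochhammer a i) / (\<Prod>b\<leftarrow>replicate s (3/2). pochhammer b i) * y ^ i / fact i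
      = (pochhammer (1/2::real) i / pochhammer (3/2) i)^s * (pochhammer (1 - real k) i / fact i) * y^i"
      by (simp add: prod_list_replicate power_divide)
    also have "\<dots> = (-1)^i * real ((k-1) choose i) * (y^i / (2 * real i + 1)^s)"
      by (simp add: P1 P2[OF assms] power_divide)
    finally show ?thesis .
  qed
  show ?thesis unfolding hyperF_def t
    by (rule suminf_finite) auto
qed

lemma main_id:
  fixes a :: "nat \<Rightarrow> real"
  shows "(\<Sum>k<n. a k) = (\<Sum>j<n. (-1)^j * real (n choose Suc j) * (\<Sum>i\<le>j. (-1)^i * real (j choose i) * a i))"
proof (induction n)
  case 0 then show ?case by simp
next
  case (Suc n)
  let ?G = "\<lambda>j. (\<Sum>i\<le>j. (-1)^i * real (j choose i) * a i)"
  have "(\<Sum>j<Suc n. (-1)^j * real (Suc n choose Suc j) * ?G j)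
      = (\<Sum>j<Suc n. (-1)^j * real (n choose Suc j) * ?G j) + (\<Sum>j<Suc n. (-1)^j * real (n choose j) * ?G j)"
    by (simp add: sum.distrib[symmetric] algebra_simps)
  also have "(\<Sum>j<Suc n. (-1)^j * real (n choose Suc j) * ?G j) = (\<Sum>k<n. a k)"
    using Suc.IH by simp
  also have "(\<Sum>j<Suc n. (-1)^j * real (n choose j) * ?G j) = a n"
    using inv_id[of n a] by (simp add: lessThan_Suc_atMost)
  finally show ?case by simp
qed

theorem lemma3p1:
  fixes n s :: nat and x :: real
  assumes "n \<ge> 1" and "s \<ge> 1"
  shows "(\<Sum>k=0..n-1. x ^ (2*k) / (2 * real k + 1) ^ s) =
    (\<Sum>k=1..n. (-1) ^ (k-1) * real (n choose k) *
       hyperF (replicate s (1/2) @ [1 - real k]) (replicate s (3/2)) (x^2))"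
proof -
  define a where "a i = (x^2)^i / (2 * real i + 1)^s" for i
  obtain m where m: "n = Suc m" using assms(1) by (cases n) auto
  have "(\<Sum>k=0..n-1. x ^ (2*k) / (2 * real k + 1) ^ s) = (\<Sum>k<n. a k)"
    using m by (simp add: a_def atLeast0AtMost lessThan_Suc_atMost power_mult)
  also have "\<dots> = (\<Sum>j<n. (-1)^j * real (n choose Suc j) * (\<Sum>i\<le>j. (-1)^i * real (j choose i) * a i))"
    by (rule main_id)
  also have "\<dots> = (\<Sum>j=0..m. (-1)^j * real (n choose Suc j) * hyperF (replicate s (1/2) @ [1 - real (Suc j)]) (replicate s (3/2)) (x^2))"
    unfolding m atLeast0AtMost lessThan_Suc_atMost
  proof (rule sum.cong[OF refl])
    fix j
    have "hyperF (replicate s (1/2) @ [1 - real (Suc j)]) (replicate s (3/2)) (x^2)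
       = (\<Sum>i\<le>Suc j-1. (-1)^i * real ((Suc j-1) choose i) * ((x^2)^i / (2 * real i + 1)^s))"
      by (rule hyp_eval) simp
    then show "(-1)^j * real (Suc m choose Suc j) * (\<Sum>i\<le>j. (-1)^i * real (j choose i) * a i)
      = (-1)^j * real (Suc m choose Suc j) * hyperF (replicate s (1/2) @ [1 - real (Suc j)]) (replicate s (3/2)) (x^2)"
      by (simp add: a_def)
  qed
  also have "\<dots> = (\<Sum>k=1..n. (-1) ^ (k-1) * real (n choose k) *
       hyperF (replicate s (1/2) @ [1 - real k]) (replicate s (3/2)) (x^2))"
    using m sum.shift_bounds_cl_Suc_ivl[of "\<lambda>k. (-1) ^ (k-1) * real (n choose k) *
       hyperF (replicate s (1/2) @ [1 - real k]) (replicate s (3/2)) (x^2)" 0 m]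
    by simp
  finally show ?thesis .
qed

end
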